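(* A geodesic metric space is $(L,C)$-quasi-isometric to $\mathbb{R}$ for some $L\geqslant 1$, $C\geqslant 0$ if and only if it is $(1,C')$-quasi-isometric to $\mathbb{R}$ for some $C'\geqslant 0$.
   Context: A map $f:(X,d_X)\to(Y,d_Y)$ is an $(L,C)$-quasi-isometry if $\frac1L d_X(a,b)-C\leqslant d_Y(f(a),f(b))\leqslant Ld_X(a,b)+C$ for all $a,b\in X$ and every point of $Y$ is within distance $C$ of $f(X)$. $\mathbb{R}$ carries its standard metric. *)

theory Defs
  imports Complex_Main
begin

definition geodesic_space :: "'a::metric_space set \<Rightarrow> bool" where
  "geodesic_space S \<longleftrightarrow>
     (\<forall>a\<in>S. \<forall>b\<in>S. \<exists>\<gamma> :: real \<Rightarrow> 'a.
        \<gamma> 0 = a \<and> \<gamma> (dist a b) = b \<and> \<gamma> ` {0..dist a b} \<subseteq> S \<and>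
        (\<forall>s\<in>{0..dist a b}. \<forall>t\<in>{0..dist a b}. dist (\<gamma> s) (\<gamma> t) = \<bar>s - t\<bar>))"

definition qi_map :: "real \<Rightarrow> real \<Rightarrow> ('a::metric_space \<Rightarrow> 'b::metric_space) \<Rightarrow> bool" where
  "qi_map L C f \<longleftrightarrow>
     (\<forall>a b. dist a b / L - C \<le> dist (f a) (f b) \<and> dist (f a) (f b) \<le> L * dist a b + C) \<and>
     (\<forall>y. \<exists>x. dist y (f x) \<le> C)"

end

theory Submission
  imports Defs
begin

lemma coarse_ivt:
  fixes \<phi> :: "real \<Rightarrow> real"
  assumes D: "D \<ge> 0" and L: "L \<ge> 0" and h0: "\<phi> 0 \<le> v" and hD: "v \<le> \<phi> D"
    and lip: "\<forall>s\<in>{0..D}. \<forall>t\<in>{0..D}. \<bar>\<phi> s - \<phi> t\<bar> \<le> L*\<bar>s-t\<bar> + C"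
  shows "\<exists>r\<in>{0..D}. \<bar>\<phi> r - v\<bar> \<le> L + C"
proof -
  define S where "S = {r\<in>{0..D}. \<phi> r \<le> v}"
  have S0: "0 \<in> S" using D h0 by (simp add: S_def)
  have bdd: "bdd_above S" unfolding S_def by (rule bdd_aboveI[of _ D]) auto
  define s where "s = Sup S"
  have "s - 1/2 < s" by simp
  then obtain r1 where r1: "r1 \<in> S" "s - 1/2 < r1"
    using less_cSup_iff[of S "s - 1/2"] S0 bdd unfolding s_def by blast
  have r1s: "r1 \<le> s" unfolding s_def using r1(1) bdd by (rule cSup_upper)
  have r1D: "r1 \<in> {0..D}" "\<phi> r1 \<le> v" using r1(1) by (auto simp: S_def)
  show ?thesis
  proof (cases "\<phi> r1 \<ge> v - (L + C)")
    case True
    then show ?thesis using r1D by (intro bexI[of _ r1]) auto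
  next
    case False
    define r2 where "r2 = min D (r1+1)"
    have r2D: "r2 \<in> {0..D}" using r1D by (auto simp: r2_def)
    show ?thesis
    proof (cases "r2 \<in> S")
      case True
      have "r2 \<le> s" unfolding s_def using True bdd by (rule cSup_upper)
      then have "r2 = D" using r1 unfolding r2_def by (auto simp: min_def split: if_splits)
      then have "\<phi> D = v" using True hD by (auto simp: S_def)
      moreover have "0 \<le> C" using lip D by force
      ultimately show ?thesis using D L by (intro bexI[of _ D]) auto
    next
      case False
      have g: "\<phi> r2 > v" using False r2D by (auto simp: S_def)
      have "\<bar>r2 - r1\<bar> \<le> 1" using r1D unfolding r2_def by auto
      then have "L*\<bar>r2 - r1\<bar> \<le> L" using L mult_left_mono[of "\<bar>r2 - r1\<bar>" 1 L] by simp
      moreover have "\<bar>\<phi> r2 - \<phi> r1\<bar> \<le> L*\<bar>r2-r1\<bar> + C" using lip r2D r1D by blast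
      ultimately have "\<phi> r1 \<ge> \<phi> r2 - L - C" by linarith
      then show ?thesis using g \<open>\<not> \<phi> r1 \<ge> v - (L + C)\<close> by linarith
    qed
  qed
qed

lemma btw_aux:
  fixes f :: "'a::metric_space \<Rightarrow> real"
  assumes geo: "geodesic_space (UNIV :: 'a set)" and L: "L \<ge> 1"
    and lo: "\<forall>a b. dist a b / L - C \<le> dist (f a) (f b)"
    and up: "\<forall>a b. dist (f a) (f b) \<le> L * dist a b + C"
    and z: "f x \<le> f z" "f z \<le> f y"
  shows "dist x z + dist z y \<le> dist x y + 2 * (L * (L + 2*C))"
proof -
  define D where "D = dist x y"
  obtain \<gamma> :: "real \<Rightarrow> 'a" where g0: "\<gamma> 0 = x" and gD: "\<gamma> D = y"
    and iso: "\<forall>s\<in>{0..D}. \<forall>t\<in>{0..D}. dist (\<gamma> s) (\<gamma> t) = \<bar>s - t\<bar>"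
    using geo unfolding geodesic_space_def D_def by blast
  have D0: "D \<ge> 0" by (simp add: D_def)
  have lip: "\<forall>s\<in>{0..D}. \<forall>t\<in>{0..D}. \<bar>f (\<gamma> s) - f (\<gamma> t)\<bar> \<le> L*\<bar>s-t\<bar> + C"
    using up iso by (metis dist_real_def)
  obtain r where r: "r \<in> {0..D}" "\<bar>f (\<gamma> r) - f z\<bar> \<le> L + C"
    using coarse_ivt[of D L "\<lambda>r. f (\<gamma> r)" "f z" C] D0 L z g0 gD lip by auto
  have "dist (\<gamma> r) z / L - C \<le> L + C" using lo r(2) by (metis dist_real_def order_trans)
  then have "dist (\<gamma> r) z / L \<le> L + 2*C" by simp
  then have K: "dist (\<gamma> r) z \<le> L * (L + 2*C)" using L by (simp add: divide_le_eq mult.commute)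
  have "dist x (\<gamma> r) = r" using iso r(1) g0 D0 by (metis atLeastAtMost_iff order_refl abs_of_nonneg diff_0 abs_minus_cancel)
  moreover have "dist (\<gamma> r) y = D - r" using iso r(1) gD D0
    by (metis atLeastAtMost_iff order_refl abs_of_nonpos diff_le_0_iff_le minus_diff_eq)
  moreover have "dist x z \<le> dist x (\<gamma> r) + dist (\<gamma> r) z" by (rule dist_triangle)
  moreover have "dist z y \<le> dist z (\<gamma> r) + dist (\<gamma> r) y" by (rule dist_triangle)
  ultimately show ?thesis using K by (simp add: D_def dist_commute)
qed

lemma btw:
  fixes f :: "'a::metric_space \<Rightarrow> real"
  assumes geo: "geodesic_space (UNIV :: 'a set)" and L: "L \<ge> 1"
    and lo: "\<forall>a b. dist a b / L - C \<le> dist (f a) (f b)"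
    and up: "\<forall>a b. dist (f a) (f b) \<le> L * dist a b + C"
    and z: "min (f x) (f y) \<le> f z" "f z \<le> max (f x) (f y)"
  shows "dist x z + dist z y \<le> dist x y + 2 * (L * (L + 2*C))"
proof (cases "f x \<le> f y")
  case True
  then show ?thesis using btw_aux[OF geo L lo up, of x z y] z by auto
next
  case False
  then have "dist y z + dist z x \<le> dist y x + 2 * (L * (L + 2*C))"
    using btw_aux[OF geo L lo up, of y z x] z by auto
  then show ?thesis by (simp add: dist_commute)
qed


lemma geo_point:
  assumes geo: "geodesic_space (UNIV :: 'a::metric_space set)"
    and t: "0 \<le> t" "t \<le> dist (p::'a) y"
  shows "\<exists>x. dist p x = t \<and> dist x y = dist p y - t"
proof -
  define D where "D = dist p y"
  obtain \<gamma> :: "real \<Rightarrow> 'a" where g0: "\<gamma> 0 = p" and gD: "\<gamma> D = y"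
    and iso: "\<forall>s\<in>{0..D}. \<forall>t\<in>{0..D}. dist (\<gamma> s) (\<gamma> t) = \<bar>s - t\<bar>"
    using geo unfolding geodesic_space_def D_def by blast
  have m: "t \<in> {0..D}" "0 \<in> {0..D}" "D \<in> {0..D}" using t unfolding D_def by auto
  have "dist p (\<gamma> t) = t" using iso m t g0 by fastforce
  moreover have "dist (\<gamma> t) y = D - t" using iso m t gD by fastforce
  ultimately show ?thesis unfolding D_def by blast
qed

theorem corollary4p12:
  assumes "geodesic_space (UNIV :: 'a::metric_space set)"
  shows "(\<exists>L C (f :: 'a \<Rightarrow> real). L \<ge> 1 \<and> C \<ge> 0 \<and> qi_map L C f) \<longleftrightarrow>
         (\<exists>C' (f :: 'a \<Rightarrow> real). C' \<ge> 0 \<and> qi_map 1 C' f)"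
proof
  assume "\<exists>C' (f :: 'a \<Rightarrow> real). C' \<ge> 0 \<and> qi_map 1 C' f"
  then show "\<exists>L C (f :: 'a \<Rightarrow> real). L \<ge> 1 \<and> C \<ge> 0 \<and> qi_map L C f" by auto
next
  assume "\<exists>L C (f :: 'a \<Rightarrow> real). L \<ge> 1 \<and> C \<ge> 0 \<and> qi_map L C f"
  then obtain L C and f :: "'a \<Rightarrow> real" where L: "L \<ge> 1" and C: "C \<ge> 0" and q: "qi_map L C f"
    by blast
  have lo: "\<forall>a b. dist a b / L - C \<le> dist (f a) (f b)"
    and up: "\<forall>a b. dist (f a) (f b) \<le> L * dist a b + C"
    and su: "\<forall>y. \<exists>x. dist y (f x) \<le> C" using q unfolding qi_map_def by auto
  define K where "K = L * (L + 2*C)"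
  have K0: "K \<ge> 0" using L C unfolding K_def by simp
  have B: "dist x z + dist z y \<le> dist x y + 2*K"
    if "min (f x) (f y) \<le> f z" "f z \<le> max (f x) (f y)" for x y z
    using btw[OF assms L lo up that] unfolding K_def .
  define p0 :: 'a where "p0 = undefined"
  define g where "g x = (if f x \<ge> f p0 then dist x p0 else - dist x p0)" for x
  have tri1: "dist a b \<le> dist a p0 + dist p0 b" for a b by (rule dist_triangle)
  have tri2: "\<bar>dist a p0 - dist b p0\<bar> \<le> dist a b" for a b
    by (metis abs_le_iff dist_commute dist_triangle diff_le_eq minus_diff_eq)
  have ineq: "dist a b - 2*K \<le> \<bar>g a - g b\<bar> \<and> \<bar>g a - g b\<bar> \<le> dist a b + 2*K" for a b
  proof (cases "f a \<ge> f p0")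
    case ta: True
    show ?thesis
    proof (cases "f b \<ge> f p0")
      case tb: True
      have "dist p0 a + dist a b \<le> dist p0 b + 2*K" if "f a \<le> f b" using B[of p0 b a] ta tb that by auto
      moreover have "dist p0 b + dist b a \<le> dist p0 a + 2*K" if "f b \<le> f a" using B[of p0 a b] ta tb that by auto
      ultimately show ?thesis using tri2[of a b] ta tb unfolding g_def
        using K0 zero_le_dist[of a p0] zero_le_dist[of b p0] by (simp add: dist_commute; smt (verit) zero_le_dist dist_commute)
    next
      case tb: False
      have "dist a p0 + dist p0 b \<le> dist a b + 2*K" using B[of a b p0] ta tb by auto
      then show ?thesis using tri1[of a b] ta tb unfolding g_def
        using K0 zero_le_dist[of a p0] zero_le_dist[of b p0] by (simp add: dist_commute; smt (verit) zero_le_dist dist_commute)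
    qed
  next
    case ta: False
    show ?thesis
    proof (cases "f b \<ge> f p0")
      case tb: True
      have "dist a p0 + dist p0 b \<le> dist a b + 2*K" using B[of a b p0] ta tb by auto
      then show ?thesis using tri1[of a b] ta tb unfolding g_def
        using K0 zero_le_dist[of a p0] zero_le_dist[of b p0] by (simp add: dist_commute; smt (verit) zero_le_dist dist_commute)
    next
      case tb: False
      have "dist a b + dist b p0 \<le> dist a p0 + 2*K" if "f a \<le> f b" using B[of a p0 b] ta tb that by auto
      moreover have "dist b a + dist a p0 \<le> dist b p0 + 2*K" if "f b \<le> f a" using B[of b p0 a] ta tb that by auto
      ultimately show ?thesis using tri2[of a b] ta tb unfolding g_def
        using K0 zero_le_dist[of a p0] zero_le_dist[of b p0] by (simp add: dist_commute; smt (verit) zero_le_dist dist_commute)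
    qed
  qed
  have surj: "\<exists>x. \<bar>t - g x\<bar> \<le> 2*K" for t
  proof -
    consider "\<bar>t\<bar> \<le> K" | "t > K" | "t < - K" by linarith
    then show ?thesis
    proof cases
      case 1
      have "g p0 = 0" unfolding g_def by simp
      then show ?thesis using 1 K0 by (intro exI[of _ p0]) auto
    next
      case 2
      obtain y where y: "dist (f p0 + L*t + 2*C + 1) (f y) \<le> C" using su by blast
      have fy: "f y \<ge> f p0 + L*t + C + 1" using y by (auto simp: dist_real_def abs_le_iff)
      have "L*t \<ge> 0" using 2 K0 L by simp
      then have fy2: "dist (f y) (f p0) \<ge> L*t + C + 1" using fy by (auto simp: dist_real_def)
      then have "L*t + C + 1 \<le> L * dist y p0 + C" using up by (meson order_trans)
      then have "L*t \<le> L * dist y p0" by simp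
      then have dy: "t \<le> dist p0 y" using L by (simp add: dist_commute)
      obtain x where x: "dist p0 x = t" "dist x y = dist p0 y - t"
        using geo_point[OF assms _ dy] 2 K0 by auto
      show ?thesis
      proof (cases "f x \<ge> f p0")
        case True
        then show ?thesis using x K0 unfolding g_def by (intro exI[of _ x]) (auto simp: dist_commute)
      next
        case False
        have "dist x p0 + dist p0 y \<le> dist x y + 2*K" using B[of x y p0] False fy \<open>L*t \<ge> 0\<close> C by auto
        then have False using x 2 by (simp add: dist_commute)
        then show ?thesis ..
      qed
    next
      case 3
      obtain y where y: "dist (f p0 + L*t - 2*C - 1) (f y) \<le> C" using su by blast
      have fy: "f y \<le> f p0 + L*t - C - 1" using y by (auto simp: dist_real_def abs_le_iff)
      have "L*t \<le> 0" using 3 K0 L by (simp add: mult_nonneg_nonpos)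
      then have fy2: "dist (f y) (f p0) \<ge> - L*t + C + 1" using fy by (auto simp: dist_real_def)
      then have "- L*t + C + 1 \<le> L * dist y p0 + C" using up by (meson order_trans)
      then have "L*(-t) \<le> L * dist y p0" by simp
      then have dy: "-t \<le> dist p0 y" using L mult_le_cancel_left_pos[of L "-t" "dist y p0"] by (simp add: dist_commute)
      obtain x where x: "dist p0 x = -t" "dist x y = dist p0 y - (-t)"
        using geo_point[OF assms _ dy] 3 K0 by auto
      show ?thesis
      proof (cases "f x \<ge> f p0")
        case False
        then show ?thesis using x K0 unfolding g_def by (intro exI[of _ x]) (auto simp: dist_commute)
      next
        case True
        have "dist x p0 + dist p0 y \<le> dist x y + 2*K" using B[of x y p0] True fy \<open>L*t \<le> 0\<close> C by auto
        then have False using x 3 by (simp add: dist_commute)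
        then show ?thesis ..
      qed
    qed
  qed
  have "qi_map 1 (2*K) g" unfolding qi_map_def
  proof (intro conjI allI)
    fix a b
    show "dist a b / 1 - 2*K \<le> dist (g a) (g b)" using ineq[of a b] by (simp add: dist_real_def)
    show "dist (g a) (g b) \<le> 1 * dist a b + 2*K" using ineq[of a b] by (simp add: dist_real_def)
  next
    fix y
    show "\<exists>x. dist y (g x) \<le> 2*K" using surj[of y] by (simp add: dist_real_def)
  qed
  then show "\<exists>C' (f :: 'a \<Rightarrow> real). C' \<ge> 0 \<and> qi_map 1 C' f" using K0
    by (intro exI[of _ "2*K"] exI[of _ g]) auto
qed

end
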